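(* Let $0\le\theta_1<\theta_2\le\frac{\pi}{2}$ and $d=\lceil\frac{1}{\theta_2-\theta_1}\rceil$. Define the grid point $p=P_1(\theta_1,\theta_2)$ by: (i) if $\theta_2-\theta_1>\frac{\pi}{4}$: $p=(1,1)$; (ii) if $\arctan(\frac12)<\theta_2-\theta_1\le\frac{\pi}{4}$: $p=(1,2)$ if $\theta_1\ge\frac{\pi}{4}$; $p=(1,1)$ if $\arctan(\frac12)\le\theta_1<\frac{\pi}{4}$; $p=(2,1)$ if $\theta_1<\arctan(\frac12)$; (iii) if $\theta_2-\theta_1\le\arctan(\frac12)$: $p=(d,\lfloor\tan(\theta_1)\,d+1\rfloor)$ if $\theta_2\le\frac{\pi}{4}$; $p=(1,1)$ if $\theta_1<\frac{\pi}{4}<\theta_2$; $p=(\lfloor\tan(\frac{\pi}{2}-\theta_2)\,d+1\rfloor,d)$ if $\theta_1\ge\frac{\pi}{4}$. Then the segment $e$ from $(0,0)$ to $p$ satisfies $\theta_1<slope(e)<\theta_2$, and, writing $p=(x,y)$, we have $\max(x,y)\le\frac{\pi}{2}\cdot\frac{1}{\theta_2-\theta_1}$.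
   Context: The slope of a segment from $(0,0)$ to a point $p\neq(0,0)$ is the angle (mod $2\pi$) of the counter-clockwise rotation taking the positive $x$-axis onto the half-line from the origin through $p$. *)

theory Defs
  imports "HOL-Analysis.Analysis"
begin

definition slope :: "real \<times> real \<Rightarrow> real" where
  "slope p = (let a = Arg (Complex (fst p) (snd p)) in if a < 0 then a + 2 * pi else a)"

definition P1 :: "real \<Rightarrow> real \<Rightarrow> int \<times> int" where
  "P1 t1 t2 = (let d = \<lceil>1 / (t2 - t1)\<rceil> in
     if t2 - t1 > pi / 4 then (1, 1)
     else if arctan (1/2) < t2 - t1 then
       (if t1 \<ge> pi / 4 then (1, 2)
        else if arctan (1/2) \<le> t1 then (1, 1)
        else (2, 1))
     else
       (if t2 \<le> pi / 4 then (d, \<lfloor>tan t1 * d + 1\<rfloor>)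
        else if t1 < pi / 4 then (1, 1)
        else (\<lfloor>tan (pi / 2 - t2) * d + 1\<rfloor>, d)))"

end

theory Submission
  imports Defs
begin

lemma tan_growth:
  fixes x y :: real
  assumes "0 \<le> y" "y < x" "x < pi/2"
  shows "x - y < tan x - tan y"
proof -
  have "DERIV tan x' :> inverse ((cos x')\<^sup>2)" if "y \<le> x'" "x' \<le> x" for x'
  proof -
    have "-(pi/2) < x'" and "x' < pi/2" using that assms by auto
    with cos_gt_zero_pi have "cos x' \<noteq> 0" by force
    then show ?thesis by (rule DERIV_tan)
  qed
  from MVT2[OF \<open>y < x\<close> this]
  obtain z where z: "y < z" "z < x"
    and tan_diff: "tan x - tan y = (x - y) * inverse ((cos z)\<^sup>2)" by auto
  have "0 < cos z" using z assms cos_gt_zero_pi by auto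
  moreover have "0 < sin z" using z assms by (intro sin_gt_zero) auto
  moreover have "0 < sin z * sin z" using \<open>0 < sin z\<close> by simp
  ultimately have "(cos z)\<^sup>2 < 1" "0 < (cos z)\<^sup>2"
    unfolding power2_eq_square using sin_cos_squared_add[of z, unfolded power2_eq_square]
    by (linarith, simp)
  then have "1 < inverse ((cos z)\<^sup>2)" by (simp add: one_less_inverse)
  then show ?thesis unfolding tan_diff using z by simp
qed

lemma atn_half_lt: "arctan (1/2::real) < 1/2"
proof -
  have a: "0 < arctan (1/2::real)" by (simp add: arctan_less_iff[of 0, simplified])
  have "arctan (1/2) - 0 < tan (arctan (1/2::real)) - tan 0"
    using tan_growth[of 0 "arctan (1/2)"] a arctan_ubound by auto
  then show ?thesis by (simp add: tan_arctan)
qed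

lemma atn_half_gt: "pi/4 < 2 * arctan (1/2::real)"
proof -
  have "2 * arctan (1/2::real) = arctan (4/3)"
    using arctan_double[of "1/2::real"] by (simp add: power2_eq_square)
  moreover have "pi/4 < arctan (4/3::real)" using arctan_less_iff[of 1 "4/3"] arctan_one by simp
  ultimately show ?thesis by linarith
qed

lemma pi_half_bound: "1/2 < pi/2 - (1::real)"
  using pi_gt3 by simp

lemma slope_pos:
  assumes "0 < x" "0 < y"
  shows "slope (x, y) = arctan (y / x)"
proof -
  have "Arg (Complex x y) = arctan (y / x)"
    using arg_conv_arctan[of "Complex x y"] assms by simp
  moreover have "0 < arctan (y/x)" using assms
    by (simp add: arctan_less_iff[of 0, simplified])
  ultimately show ?thesis unfolding slope_def Let_def by simp
qed

lemma core:
  fixes s1 s2 :: real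
  assumes "0 \<le> s1" "s1 < s2" "s2 \<le> pi/4" "s2 - s1 \<le> arctan (1/2)"
  defines "d \<equiv> \<lceil>1 / (s2 - s1)\<rceil>"
  defines "y \<equiv> \<lfloor>tan s1 * d + 1\<rfloor>"
  shows "s1 < arctan (y/d) \<and> arctan (y/d) < s2 \<and> 1 \<le> y \<and> y \<le> d \<and> 1 \<le> d
         \<and> real_of_int d \<le> pi/2 * (1/(s2-s1))"
proof -
  define \<delta> where "\<delta> = s2 - s1"
  have dpos: "0 < \<delta>" using assms unfolding \<delta>_def by simp
  have dle: "\<delta> < 1/2" using assms atn_half_lt unfolding \<delta>_def by simp
  have "2 < 1/\<delta>" using dpos dle by (simp add: field_simps)
  have d1: "1/\<delta> \<le> d" unfolding d_def \<delta>_def by simp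
  have d2: "d < 1/\<delta> + 1" unfolding d_def \<delta>_def by linarith
  have dp: "0 < real_of_int d" using d1 \<open>2 < 1/\<delta>\<close> by simp
  have "1/d \<le> \<delta>" using d1 dpos dp by (simp add: field_simps)
  have ts1: "0 \<le> tan s1" using assms by (intro tan_pos_pi2_le) auto
  have s2lt: "s2 < pi/2" using assms pi_gt_zero by linarith
  have ts2: "tan s2 \<le> 1"
  proof (cases "s2 = pi/4")
    case True then show ?thesis unfolding True tan_45 by simp
  next
    case False
    then have "tan s2 < tan (pi/4)" using assms by (intro tan_monotone) auto
    then show ?thesis unfolding tan_45 by simp
  qed
  have y1: "tan s1 * d < y" unfolding y_def by linarith
  have y2: "y \<le> tan s1 * d + 1" unfolding y_def by linarith
  have "tan s1 < y/d" using y1 dp by (simp add: field_simps)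
  then have A: "s1 < arctan (y/d)"
    using arctan_less_iff[of "tan s1" "y/d"] arctan_tan[of s1] assms s2lt by auto
  have "y/d \<le> tan s1 + 1/d" using y2 dp by (simp add: field_simps)
  also have "\<dots> \<le> tan s1 + \<delta>" using \<open>1/d \<le> \<delta>\<close> by simp
  also have "\<dots> < tan s2" using tan_growth[of s1 s2] assms s2lt unfolding \<delta>_def by simp
  finally have yd: "y/d < tan s2" .
  then have B: "arctan (y/d) < s2"
    using arctan_less_iff[of "y/d" "tan s2"] arctan_tan[of s2] assms s2lt by auto
  have "0 < real_of_int y" using y1 ts1 dp by (smt (verit) mult_nonneg_nonneg)
  then have C: "1 \<le> y" by simp
  have "real_of_int y < d * tan s2" using yd dp by (simp add: field_simps)
  also have "\<dots> \<le> d" using ts2 dp mult_left_mono[of "tan s2" 1 "real_of_int d"] by simp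
  finally have "real_of_int y < d" .
  then have D: "y \<le> d" by simp
  have "1/\<delta> + 1 \<le> pi/2 * (1/\<delta>)"
  proof -
    have "\<delta> \<le> pi/2 - 1" using dle pi_half_bound by simp
    then have "2 + \<delta> * 2 \<le> pi" by simp
    then have "\<delta> * (2 + \<delta> * 2) \<le> \<delta> * pi" using dpos by (intro mult_left_mono) auto
    then show ?thesis using dpos by (simp add: field_simps algebra_simps)
  qed
  then have E: "real_of_int d \<le> pi/2 * (1/(s2-s1))" using d2 unfolding \<delta>_def by simp
  show ?thesis using A B C D E dp by simp
qed

theorem lemma3:
  fixes t1 t2 :: real
  assumes "0 \<le> t1" and "t1 < t2" and "t2 \<le> pi / 2"
  shows "t1 < slope (real_of_int (fst (P1 t1 t2)), real_of_int (snd (P1 t1 t2)))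
       \<and> slope (real_of_int (fst (P1 t1 t2)), real_of_int (snd (P1 t1 t2))) < t2
       \<and> real_of_int (max (fst (P1 t1 t2)) (snd (P1 t1 t2))) \<le> pi / 2 * (1 / (t2 - t1))"
proof -
  define a where "a = arctan (1/2::real)"
  have a1: "a < 1/2" using atn_half_lt unfolding a_def .
  have a2: "pi/4 < 2*a" using atn_half_gt unfolding a_def .
  have a0: "0 < a" unfolding a_def by (simp add: arctan_less_iff[of 0, simplified])
  have at2: "arctan 2 = pi/2 - a"
    using arctan_inverse[of "1/2::real"] unfolding a_def by simp
  have dpos: "0 < t2 - t1" using assms by simp
  have s11: "slope (1, 1) = pi/4" using slope_pos[of 1 1] by (simp add: arctan_one)
  have s12: "slope (1, 2) = pi/2 - a" using slope_pos[of 1 2] at2 by simp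
  have s21: "slope (2, 1) = a" using slope_pos[of 2 1] unfolding a_def by simp
  have m1: "1 \<le> pi/2 * (1/(t2-t1))" using assms dpos by (simp add: field_simps)
  show ?thesis
  proof (cases "t2 - t1 > pi/4")
    case True
    then show ?thesis using assms m1 s11 unfolding P1_def Let_def by auto
  next
    case c1: False
    show ?thesis
    proof (cases "a < t2 - t1")
      case c2: True
      have m2: "2 \<le> pi/2 * (1/(t2-t1))" using c1 dpos by (simp add: field_simps)
      show ?thesis
      proof (cases "t1 \<ge> pi/4")
        case True
        then show ?thesis using c1 c2 m2 s12 a2 assms unfolding P1_def Let_def a_def[symmetric]
          by auto
      next
        case f: False
        show ?thesis
        proof (cases "a \<le> t1")
          case True
          then show ?thesis using c1 c2 f m1 s11 a2 assms unfolding P1_def Let_def a_def[symmetric]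
            by auto
        next
          case False
          then show ?thesis using c1 c2 f m2 s21 a2 assms unfolding P1_def Let_def a_def[symmetric]
            by auto
        qed
      qed
    next
      case c2: False
      show ?thesis
      proof (cases "t2 \<le> pi/4")
        case True
        define d where "d = \<lceil>1 / (t2 - t1)\<rceil>"
        define y where "y = \<lfloor>tan t1 * d + 1\<rfloor>"
        have P: "P1 t1 t2 = (d, y)" using c1 c2 True unfolding P1_def Let_def a_def[symmetric] d_def y_def
          by auto
        have K: "t1 < arctan (y/d) \<and> arctan (y/d) < t2 \<and> 1 \<le> y \<and> y \<le> d \<and> 1 \<le> d
         \<and> real_of_int d \<le> pi/2 * (1/(t2-t1))"
          using core[of t1 t2] assms True c2 unfolding a_def d_def y_def by simp
        then have "slope (real_of_int d, real_of_int y) = arctan (y/d)"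
          by (intro slope_pos) auto
        then show ?thesis using K P by (simp add: max_def)
      next
        case f: False
        show ?thesis
        proof (cases "t1 < pi/4")
          case True
          then show ?thesis using c1 c2 f m1 s11 assms unfolding P1_def Let_def a_def[symmetric]
            by auto
        next
          case False
          define d where "d = \<lceil>1 / (t2 - t1)\<rceil>"
          define x where "x = \<lfloor>tan (pi/2 - t2) * d + 1\<rfloor>"
          have P: "P1 t1 t2 = (x, d)" using c1 c2 f False unfolding P1_def Let_def a_def[symmetric] d_def x_def
            by auto
          have e: "(pi/2 - t1) - (pi/2 - t2) = t2 - t1" by simp
          have K: "pi/2 - t2 < arctan (x/d) \<and> arctan (x/d) < pi/2 - t1 \<and> 1 \<le> x \<and> x \<le> d \<and> 1 \<le> d
           \<and> real_of_int d \<le> pi/2 * (1/((pi/2 - t1) - (pi/2 - t2)))"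
            using core[of "pi/2 - t2" "pi/2 - t1"] assms False c2 unfolding a_def d_def x_def e
            by simp
          have xd: "0 < real_of_int x / real_of_int d" using K by simp
          have "slope (real_of_int x, real_of_int d) = arctan (d/x)"
            using K by (intro slope_pos) auto
          also have "\<dots> = pi/2 - arctan (x/d)"
            using arctan_inverse[of "x/d"] xd by simp
          finally show ?thesis using K P e by (simp add: max_def)
        qed
      qed
    qed
  qed
qed

end
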